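(* Let $N\ge 1$ and let $A\subset\Gamma=\mathbb N_0^s$ be a monomial degree reducing universal interpolation set of order $N$. Then $A$ contains every lower set $B\subset\Gamma$ with $1\le \#B\le N$, i.e. \[ A\supseteq \bigcup_{j=1}^N\ \bigcup_{B\in L_j(\Gamma)} B . \]
   Context: $\Pi=\mathbb C[x_1,\dots,x_s]$, $\deg$ is total degree with $\deg 0<0$. For $A\subset\Gamma=\mathbb N_0^s$, $\Pi_A$ is the span of the monomials $x^\alpha$, $\alpha\in A$. A subspace $\mathcal P\subseteq\Pi$ is a degree reducing universal interpolation space of order $N$ if for every finite $X\subset\mathbb C^s$ with $\#X\le N$ and every $q\in\Pi$ there is $p\in\mathcal P$ with $p|_X=q|_X$ and $\deg p\le\deg q$. A set $A\subset\Gamma$ is a monomial degree reducing universal interpolation set of order $N$ if $\Pi_A$ is a degree reducing universal interpolation space of order $N$. For $\alpha,\beta\in\Gamma$, $\alpha\le\beta$ means $\alpha_j\le\beta_j$ for all $j$; $B\subset\Gamma$ is a lower set if $\alpha\in B$ and $\beta\le\alpha$ imply $\beta\in B$; $L_j(\Gamma)$ denotes the set of lower sets of cardinality $j$. *)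

theory Defs
  imports Complex_Main
begin

text \<open>Variables are indexed by a finite type 'n, so s = CARD('n) and
  Gamma = N_0^s is the set of all multi-indices 'n \<Rightarrow> nat.
  A polynomial in C[x_1..x_s] is its coefficient function with finite support.\<close>

definition supp :: "(('n::finite \<Rightarrow> nat) \<Rightarrow> complex) \<Rightarrow> ('n \<Rightarrow> nat) set" where
  "supp c = {\<alpha>. c \<alpha> \<noteq> 0}"

definition is_poly :: "(('n::finite \<Rightarrow> nat) \<Rightarrow> complex) \<Rightarrow> bool" where
  "is_poly c \<longleftrightarrow> finite (supp c)"

definition monomial_eval :: "('n::finite \<Rightarrow> nat) \<Rightarrow> ('n \<Rightarrow> complex) \<Rightarrow> complex" where
  "monomial_eval \<alpha> x = (\<Prod>i\<in>UNIV. x i ^ \<alpha> i)"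

definition peval :: "(('n::finite \<Rightarrow> nat) \<Rightarrow> complex) \<Rightarrow> ('n \<Rightarrow> complex) \<Rightarrow> complex" where
  "peval c x = (\<Sum>\<alpha>\<in>supp c. c \<alpha> * monomial_eval \<alpha> x)"

definition tdeg :: "('n::finite \<Rightarrow> nat) \<Rightarrow> nat" where
  "tdeg \<alpha> = (\<Sum>i\<in>UNIV. \<alpha> i)"

definition pdeg :: "(('n::finite \<Rightarrow> nat) \<Rightarrow> complex) \<Rightarrow> int" where
  "pdeg c = (if supp c = {} then -1 else int (Max (tdeg ` supp c)))"

definition Pi_set :: "('n::finite \<Rightarrow> nat) set \<Rightarrow> (('n \<Rightarrow> nat) \<Rightarrow> complex) set" where
  "Pi_set A = {c. is_poly c \<and> supp c \<subseteq> A}"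

definition deg_red_univ_interp_space ::
  "(('n::finite \<Rightarrow> nat) \<Rightarrow> complex) set \<Rightarrow> nat \<Rightarrow> bool" where
  "deg_red_univ_interp_space P N \<longleftrightarrow>
     (\<forall>X :: ('n \<Rightarrow> complex) set. finite X \<and> card X \<le> N \<longrightarrow>
       (\<forall>q. is_poly q \<longrightarrow>
          (\<exists>p\<in>P. (\<forall>x\<in>X. peval p x = peval q x) \<and> pdeg p \<le> pdeg q)))"

definition monomial_druis :: "('n::finite \<Rightarrow> nat) set \<Rightarrow> nat \<Rightarrow> bool" where
  "monomial_druis A N \<longleftrightarrow> deg_red_univ_interp_space (Pi_set A) N"

definition lower_set :: "('n::finite \<Rightarrow> nat) set \<Rightarrow> bool" where
  "lower_set B \<longleftrightarrow> (\<forall>\<alpha>\<in>B. \<forall>\<beta>. (\<forall>j. \<beta> j \<le> \<alpha> j) \<longrightarrow> \<beta> \<in> B)"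

end

theory Submission imports Defs "HOL-Library.Real_Mod" "HOL-Library.FuncSet" begin

lemma root_pow_ne1:
  fixes m j :: nat assumes "0 < j" "j < m"
  shows "cis (2*pi/m) ^ j \<noteq> 1"
proof
  assume "cis (2*pi/m) ^ j = 1"
  hence "cis (real j * (2*pi/m)) = 1" by (simp add: DeMoivre)
  then obtain n :: int where n: "real j * (2*pi/m) = of_int n * (2*pi)" by (auto simp: cis_eq_1_iff)
  have "real j = of_int n * real m" using n assms by (simp add: field_simps)
  hence "int j = n * int m" by (metis of_int_eq_iff of_int_mult of_int_of_nat_eq)
  thus False using assms
    by (metis dvd_triv_right less_imp_le_nat nat_dvd_not_less of_nat_0_less_iff int_dvd_int_iff dvd_def mult.commute)
qed

lemma root_sum:
  fixes a g :: nat assumes "g \<le> a"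
  shows "(\<Sum>b\<in>{..a}. (cis (2*pi/real (Suc a)) ^ (Suc g)) ^ b) = (if g = a then of_nat (Suc a) else 0)"
proof -
  let ?w = "cis (2*pi/real (Suc a))"
  have e: "real (Suc a) * (2*pi/real (Suc a)) = 2*pi" by (simp del: of_nat_Suc)
  have wm: "?w ^ Suc a = 1" by (simp only: DeMoivre e cis_2pi)
  have "(\<Sum>b\<in>{..a}. (?w ^ (Suc g)) ^ b) = (\<Sum>b<Suc a. (?w ^ (Suc g)) ^ b)"
    by (simp add: lessThan_Suc_atMost)
  also have "\<dots> = (if g = a then of_nat (Suc a) else 0)"
  proof (cases "g = a")
    case True thus ?thesis using wm by (simp add: sum_gp_strict)
  next
    case False
    hence ne: "?w ^ Suc g \<noteq> 1" using assms by (intro root_pow_ne1) auto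
    have z1: "(?w ^ Suc g) ^ Suc a = 1" using wm by (metis power_mult mult.commute power_one)
    have "(\<Sum>b<Suc a. (?w ^ Suc g) ^ b) = (1 - (?w ^ Suc g) ^ Suc a) / (1 - ?w ^ Suc g)"
      using ne by (simp only: sum_gp_strict if_False)
    thus ?thesis using z1 False by simp
  qed
  finally show ?thesis .
qed

lemma L_mono:
  fixes \<alpha> \<gamma> :: "'n::finite \<Rightarrow> nat"
  defines "w \<equiv> \<lambda>i. cis (2*pi/real (Suc (\<alpha> i)))"
  shows "(\<Sum>\<beta>\<in>PiE UNIV (\<lambda>i. {..\<alpha> i}). (\<Prod>i\<in>UNIV. w i ^ \<beta> i) * monomial_eval \<gamma> (\<lambda>i. w i ^ \<beta> i))
     = (\<Prod>i\<in>UNIV. \<Sum>b\<in>{..\<alpha> i}. (w i ^ Suc (\<gamma> i)) ^ b)"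
proof -
  have "(\<Sum>\<beta>\<in>PiE UNIV (\<lambda>i. {..\<alpha> i}). (\<Prod>i\<in>UNIV. w i ^ \<beta> i) * monomial_eval \<gamma> (\<lambda>i. w i ^ \<beta> i))
     = (\<Sum>\<beta>\<in>PiE UNIV (\<lambda>i. {..\<alpha> i}). \<Prod>i\<in>UNIV. (w i ^ Suc (\<gamma> i)) ^ \<beta> i)"
    unfolding monomial_eval_def
    by (intro sum.cong refl) (simp add: prod.distrib[symmetric] power_mult[symmetric] power_mult_distrib mult.commute)
  also have "\<dots> = (\<Prod>i\<in>UNIV. \<Sum>b\<in>{..\<alpha> i}. (w i ^ Suc (\<gamma> i)) ^ b)"
    by (rule prod_sum_PiE[symmetric]) auto
  finally show ?thesis .
qed

theorem theorem18:
  fixes A :: "('n::finite \<Rightarrow> nat) set" and N :: nat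
  assumes "N \<ge> 1"
    and "monomial_druis A N"
  shows "\<Union> {B. lower_set B \<and> finite B \<and> 1 \<le> card B \<and> card B \<le> N} \<subseteq> A"
proof
  fix \<alpha> :: "'n \<Rightarrow> nat" assume "\<alpha> \<in> \<Union> {B. lower_set B \<and> finite B \<and> 1 \<le> card B \<and> card B \<le> N}"
  then obtain B where B: "lower_set B" "finite B" "card B \<le> N" "\<alpha> \<in> B" by auto
  show "\<alpha> \<in> A"
  proof (rule ccontr)
    assume nA: "\<alpha> \<notin> A"
    define box where "box = PiE UNIV (\<lambda>i. {..\<alpha> i})"
    have box_iff: "\<beta> \<in> box \<longleftrightarrow> (\<forall>i. \<beta> i \<le> \<alpha> i)" for \<beta> by (simp add: box_def PiE_iff)
    have boxB: "box \<subseteq> B" using B(1,4) unfolding lower_set_def box_iff by (auto simp: box_iff)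
    have fbox: "finite box" using boxB B(2) finite_subset by blast
    define w where "w \<equiv> \<lambda>i. cis (2*pi/real (Suc (\<alpha> i)))"
    define pt where "pt \<equiv> \<lambda>\<beta> i. w i ^ \<beta> (i::'n)"
    define X where "X = pt ` box"
    have fX: "finite X" using fbox X_def by simp
    have cX: "card X \<le> N" using card_image_le[OF fbox, of pt] card_mono[OF B(2) boxB] B(3) unfolding X_def by linarith
    define q :: "('n \<Rightarrow> nat) \<Rightarrow> complex" where "q = (\<lambda>\<gamma>. if \<gamma> = \<alpha> then 1 else 0)"
    have suppq: "supp q = {\<alpha>}" by (auto simp: supp_def q_def)
    have pq: "is_poly q" by (simp add: is_poly_def suppq)
    from assms(2)[unfolded monomial_druis_def deg_red_univ_interp_space_def, rule_format, OF _ pq] fX cX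
    obtain p where p: "p \<in> Pi_set A" "\<forall>x\<in>X. peval p x = peval q x" "pdeg p \<le> pdeg q" by blast
    have fp: "finite (supp p)" and sA: "supp p \<subseteq> A" using p(1) by (auto simp: Pi_set_def is_poly_def)
    have pdq: "pdeg q = int (tdeg \<alpha>)" by (simp add: pdeg_def suppq)
    define L where "L f = (\<Sum>\<beta>\<in>box. (\<Prod>i\<in>UNIV. w i ^ \<beta> i) * f (pt \<beta>))" for f :: "('n \<Rightarrow> complex) \<Rightarrow> complex"
    have Lm: "L (monomial_eval \<gamma>) = (\<Prod>i\<in>UNIV. \<Sum>b\<in>{..\<alpha> i}. (w i ^ Suc (\<gamma> i)) ^ b)" for \<gamma>
      unfolding L_def box_def pt_def w_def by (rule L_mono)
    have "peval q = monomial_eval \<alpha>" unfolding peval_def suppq by (rule ext) (simp add: q_def)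
    hence Lq: "L (peval q) = L (monomial_eval \<alpha>)" by simp
    have La: "L (monomial_eval \<alpha>) \<noteq> 0"
      unfolding Lm w_def by (subst root_sum) (auto simp del: of_nat_Suc)
    have L0: "L (monomial_eval \<gamma>) = 0" if "\<gamma> \<in> supp p" for \<gamma>
    proof -
      have ne: "\<gamma> \<noteq> \<alpha>" using that sA nA by auto
      have "supp p \<noteq> {}" using that by auto
      hence "int (tdeg \<gamma>) \<le> pdeg p" using that fp by (simp add: pdeg_def)
      hence tg: "tdeg \<gamma> \<le> tdeg \<alpha>" using p(3) pdq by simp
      have "\<exists>i. \<gamma> i < \<alpha> i"
      proof (rule ccontr)
        assume "\<not> ?thesis"
        hence ge: "\<forall>i. \<alpha> i \<le> \<gamma> i" using not_less by blast
        from ne obtain j where "\<gamma> j \<noteq> \<alpha> j" by auto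
        with ge have "\<alpha> j < \<gamma> j" using le_neq_implies_less by metis
        hence "tdeg \<alpha> < tdeg \<gamma>" unfolding tdeg_def using ge
          by (intro sum_strict_mono_ex1) auto
        thus False using tg by simp
      qed
      then obtain i where i: "\<gamma> i < \<alpha> i" by auto
      have "(\<Sum>b\<in>{..\<alpha> i}. (w i ^ Suc (\<gamma> i)) ^ b) = 0"
        unfolding w_def using i by (subst root_sum) auto
      thus ?thesis unfolding Lm by (intro prod_zero) auto
    qed
    have "L (peval p) = (\<Sum>\<gamma>\<in>supp p. p \<gamma> * L (monomial_eval \<gamma>))"
      unfolding L_def peval_def by (simp add: sum_distrib_left sum_distrib_right mult_ac sum.swap[of _ box])
    also have "\<dots> = 0" using L0 by simp
    finally have "L (peval p) = 0" .
    moreover have "L (peval p) = L (peval q)" unfolding L_def using p(2) X_def by (intro sum.cong) auto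
    ultimately show False using Lq La by simp
  qed
qed
end
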